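(* Let $N\ge 2$ be an integer and $\tau>0$. For $t\in\{0,\tau,2\tau,\dots\}$ let $u_j^t=u(j,t)$, $j=0,\dots,N$, be defined by prescribed initial values $u(j,0)$, the Dirichlet boundary condition $u_0^t=u_N^t=0$ for all $t$, and the iteration, for $j=1,\dots,N-1$, $$u_j^{t+\tau}=u_j^t+\frac{u_j^tu_{j-1}^t}{2}\bigl(u_j^t+u_{j-1}^t-1\bigr)\bigl(u_{j-1}^t-u_j^t\bigr)+\frac{u_j^tu_{j+1}^t}{2}\bigl(u_j^t+u_{j+1}^t-1\bigr)\bigl(u_{j+1}^t-u_j^t\bigr).$$ Suppose $$\tfrac12\le u(1,0)\le u(2,0)\le\cdots\le u(N-1,0)\le 1.$$ Then for all $t\in\{\tau,2\tau,\dots\}$, $$\tfrac12\le u(1,t)\le u(2,t)\le\cdots\le u(N-1,t)\le 1.$$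
   Context: Aggregation–diffusion lattice model on the grid points $x_j=j/N$ with time step $\tau$. *)

theory Defs
  imports Complex_Main
begin

end

theory Submission
  imports Defs
begin

definition G :: "real \<Rightarrow> real \<Rightarrow> real" where
  "G x y = x * y / 2 * (x + y - 1) * (y - x)"

definition Inv :: "nat \<Rightarrow> (nat \<Rightarrow> real) \<Rightarrow> bool" where
  "Inv N v \<longleftrightarrow> 1 / 2 \<le> v 1 \<and> (\<forall>j. 1 \<le> j \<and> j < N - 1 \<longrightarrow> v j \<le> v (j + 1)) \<and> v (N - 1) \<le> 1"

lemma inv_mono:
  assumes "Inv N v" "1 \<le> i" "i \<le> j" "j \<le> N - 1"
  shows "v i \<le> v j"
  using assms(3,4)
proof (induction j rule: dec_induct)
  case base then show ?case by simp
next
  case (step n)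
  then have "v n \<le> v (Suc n)" using assms(1,2) unfolding Inv_def by auto
  with step show ?case by simp
qed

lemma inv_bounds:
  assumes "Inv N v" "1 \<le> j" "j \<le> N - 1"
  shows "1/2 \<le> v j \<and> v j \<le> 1"
proof -
  have "v 1 \<le> v j" using inv_mono[OF assms(1) _ assms(2) assms(3)] by simp
  moreover have "v j \<le> v (N - 1)" using inv_mono[OF assms(1) assms(2) assms(3) order_refl] by simp
  ultimately show ?thesis using assms(1) unfolding Inv_def by auto
qed

lemma G_nonneg: "0 \<le> x \<Longrightarrow> 0 \<le> y \<Longrightarrow> 1 \<le> x + y \<Longrightarrow> x \<le> y \<Longrightarrow> 0 \<le> G x y"
  unfolding G_def by (intro mult_nonneg_nonneg) auto

lemma G_nonpos: "0 \<le> x \<Longrightarrow> 0 \<le> y \<Longrightarrow> 1 \<le> x + y \<Longrightarrow> y \<le> x \<Longrightarrow> G x y \<le> 0"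
proof -
  assume a: "0 \<le> x" "0 \<le> y" "1 \<le> x + y" "y \<le> x"
  have "0 \<le> x * y / 2 * (x + y - 1) * (x - y)" using a by (intro mult_nonneg_nonneg) auto
  then show ?thesis unfolding G_def by (simp add: algebra_simps)
qed

lemma G_zero: "G x 0 = 0" unfolding G_def by simp

lemma key:
  assumes "1/2 \<le> x" "x \<le> y" "y \<le> 1"
  shows "x \<le> y + G y x - G x y"
proof -
  have h: "G y x - G x y = - (x * y * (x + y - 1)) * (y - x)" unfolding G_def by (simp add: field_simps)
  have "x * y * (x + y - 1) \<le> 1 * 1 * 1"
    using assms by (intro mult_mono) auto
  then have "0 \<le> (1 - x * y * (x + y - 1)) * (y - x)" using assms by (intro mult_nonneg_nonneg) auto
  then show ?thesis using h by (simp add: algebra_simps)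
qed

lemma step:
  assumes N2: "N \<ge> 2" and v0: "v 0 = 0" and vN: "v N = 0"
    and w: "\<And>j. 1 \<le> j \<Longrightarrow> j \<le> N - 1 \<Longrightarrow> w j = v j + G (v j) (v (j - 1)) + G (v j) (v (j + 1))"
    and I: "Inv N v"
  shows "Inv N w"
proof -
  have bnd: "\<And>j. 1 \<le> j \<Longrightarrow> j \<le> N - 1 \<Longrightarrow> 1/2 \<le> v j \<and> v j \<le> 1"
    using inv_bounds[OF I] by blast
  have mon: "\<And>j. 1 \<le> j \<Longrightarrow> j < N - 1 \<Longrightarrow> v j \<le> v (j + 1)" using I unfolding Inv_def by auto
  have left: "G (v j) (v (j - 1)) \<le> 0" if "1 \<le> j" "j \<le> N - 1" for j
  proof (cases "j = 1")
    case True then show ?thesis using v0 by (simp add: G_zero)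
  next
    case False
    then have "v (j - 1) \<le> v j" using mon[of "j - 1"] that by simp
    moreover have "1/2 \<le> v (j-1)" "1/2 \<le> v j" using bnd[of "j-1"] bnd[of j] that False by auto
    ultimately show ?thesis by (intro G_nonpos) auto
  qed
  have right: "0 \<le> G (v j) (v (j + 1))" if "1 \<le> j" "j \<le> N - 1" for j
  proof (cases "j = N - 1")
    case True then have "j + 1 = N" using N2 by simp
    then show ?thesis using vN by (simp add: G_zero)
  next
    case False
    then have "v j \<le> v (j + 1)" using mon[of j] that by simp
    moreover have "1/2 \<le> v (j+1)" "1/2 \<le> v j" using bnd[of "j+1"] bnd[of j] that False by auto
    ultimately show ?thesis by (intro G_nonneg) auto
  qed
  have A: "1/2 \<le> w 1"
  proof -
    have "w 1 = v 1 + G (v 1) (v 0) + G (v 1) (v 2)" using w[of 1] N2 by (simp add: numeral_2_eq_2)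
    moreover have "0 \<le> G (v 1) (v 2)" using right[of 1] N2 by (simp add: numeral_2_eq_2)
    ultimately show ?thesis using v0 G_zero I unfolding Inv_def by simp
  qed
  have B: "w (N - 1) \<le> 1"
  proof -
    have e: "N - 1 + 1 = N" using N2 by simp
    have "w (N - 1) = v (N - 1) + G (v (N - 1)) (v (N - 1 - 1)) + G (v (N - 1)) (v (N - 1 + 1))"
      using w[of "N - 1"] N2 by simp
    moreover have "G (v (N - 1)) (v (N - 1 - 1)) \<le> 0" using left[of "N - 1"] N2 by simp
    ultimately show ?thesis using vN G_zero I e unfolding Inv_def by simp
  qed
  have C: "w j \<le> w (j + 1)" if "1 \<le> j" "j < N - 1" for j
  proof -
    have e: "j + 1 - 1 = j" by simp
    have wj: "w j = v j + G (v j) (v (j - 1)) + G (v j) (v (j + 1))" using w that by simp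
    have wj1: "w (j + 1) = v (j + 1) + G (v (j + 1)) (v j) + G (v (j + 1)) (v (j + 1 + 1))"
      using w[of "j+1"] that by simp
    have l: "G (v j) (v (j - 1)) \<le> 0" using left that by simp
    have r: "0 \<le> G (v (j + 1)) (v (j + 1 + 1))" using right[of "j+1"] that by simp
    have k: "v j \<le> v (j + 1) + G (v (j + 1)) (v j) - G (v j) (v (j + 1))"
      using key[of "v j" "v (j+1)"] bnd[of j] bnd[of "j+1"] mon[of j] that by simp
    show ?thesis using wj wj1 l r k by linarith
  qed
  show ?thesis unfolding Inv_def using A B C by blast
qed

theorem theorem3p4:
  fixes N :: nat and \<tau> :: real and u :: "nat \<Rightarrow> real \<Rightarrow> real"
  assumes N2: "N \<ge> 2"
    and tau_pos: "\<tau> > 0"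
    and bc0: "\<And>k::nat. u 0 (real k * \<tau>) = 0"
    and bcN: "\<And>k::nat. u N (real k * \<tau>) = 0"
    and iter: "\<And>(k::nat) j. 1 \<le> j \<Longrightarrow> j \<le> N - 1 \<Longrightarrow>
      u j (real k * \<tau> + \<tau>) =
        u j (real k * \<tau>)
        + u j (real k * \<tau>) * u (j - 1) (real k * \<tau>) / 2
            * (u j (real k * \<tau>) + u (j - 1) (real k * \<tau>) - 1)
            * (u (j - 1) (real k * \<tau>) - u j (real k * \<tau>))
        + u j (real k * \<tau>) * u (j + 1) (real k * \<tau>) / 2
            * (u j (real k * \<tau>) + u (j + 1) (real k * \<tau>) - 1)
            * (u (j + 1) (real k * \<tau>) - u j (real k * \<tau>))"
    and init_low: "1 / 2 \<le> u 1 0"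
    and init_mono: "\<And>j. 1 \<le> j \<Longrightarrow> j < N - 1 \<Longrightarrow> u j 0 \<le> u (j + 1) 0"
    and init_up: "u (N - 1) 0 \<le> 1"
  shows "\<forall>k::nat. k \<ge> 1 \<longrightarrow>
      1 / 2 \<le> u 1 (real k * \<tau>)
      \<and> (\<forall>j. 1 \<le> j \<and> j < N - 1 \<longrightarrow> u j (real k * \<tau>) \<le> u (j + 1) (real k * \<tau>))
      \<and> u (N - 1) (real k * \<tau>) \<le> 1"
proof -
  have all: "Inv N (\<lambda>j. u j (real k * \<tau>))" for k
  proof (induction k)
    case 0
    then show ?case using init_low init_mono init_up unfolding Inv_def by simp
  next
    case (Suc k)
    have t: "real (Suc k) * \<tau> = real k * \<tau> + \<tau>" by (simp add: algebra_simps)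
    show ?case unfolding t
      by (rule step[OF N2 _ _ _ Suc]) (use bc0[of k] bcN[of k] iter in \<open>auto simp: G_def\<close>)
  qed
  show ?thesis using all unfolding Inv_def by blast
qed

end
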